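(* Let $r\ge 3$ be an integer and $p\ge 5$ an odd prime. Let $e_0=1$, $e_i=\zeta_{2^r}^i+\zeta_{2^r}^{-i}$ ($i\ge1$), $n_1=2^{r-2}$, $b_j=\zeta_p^j+\zeta_p^{-j}$ ($j\ge1$), $n_2=\frac{p-1}{2}$, and let $\mathbb{K}=\mathbb{Q}(\zeta_{2^r}+\zeta_{2^r}^{-1})\,\mathbb{Q}(\zeta_p+\zeta_p^{-1})$. Let $\mathcal{I}\subseteq\mathcal{O}_{\mathbb{K}}$ be the $\mathbb{Z}$-module with $\mathbb{Z}$-basis consisting of all products $e_ib_j$ ($0\le i\le n_1-1$, $1\le j\le n_2$) except that $e_0b_{n_2}$ is replaced by $2e_0b_{n_2}$. Then $\mathcal{I}$ is not an ideal of $\mathcal{O}_{\mathbb{K}}$.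
   Context: $\zeta_m=e^{2\pi i/m}$. *)

theory Defs
  imports "HOL-Analysis.Analysis" "HOL-Computational_Algebra.Polynomial"
begin

definition zeta :: "nat \<Rightarrow> complex" where
  "zeta m = cis (2 * pi / real m)"

definition eR :: "nat \<Rightarrow> nat \<Rightarrow> complex" where
  "eR r i = (if i = 0 then 1 else zeta (2^r) ^ i + inverse (zeta (2^r) ^ i))"

definition bP :: "nat \<Rightarrow> nat \<Rightarrow> complex" where
  "bP p j = zeta p ^ j + inverse (zeta p ^ j)"

definition is_subfield :: "complex set \<Rightarrow> bool" where
  "is_subfield F \<longleftrightarrow> 0 \<in> F \<and> 1 \<in> F \<and>
     (\<forall>x\<in>F. \<forall>y\<in>F. x + y \<in> F \<and> x - y \<in> F \<and> x * y \<in> F) \<and>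
     (\<forall>x\<in>F. x \<noteq> 0 \<longrightarrow> inverse x \<in> F)"

definition gen_field :: "complex set \<Rightarrow> complex set" where
  "gen_field S = \<Inter> {F. is_subfield F \<and> S \<subseteq> F}"

(* K = Q(zeta_{2^r}+zeta_{2^r}^{-1}) Q(zeta_p+zeta_p^{-1}): the compositum, i.e. the
   subfield of C generated by both fields (equivalently by both generators) *)
definition KK :: "nat \<Rightarrow> nat \<Rightarrow> complex set" where
  "KK r p = gen_field (gen_field {eR r 1} \<union> gen_field {bP p 1})"

definition ring_of_integers :: "complex set \<Rightarrow> complex set" where
  "ring_of_integers K = {x \<in> K. algebraic_int x}"

definition is_ideal :: "complex set \<Rightarrow> complex set \<Rightarrow> bool" where
  "is_ideal I R \<longleftrightarrow> I \<subseteq> R \<and> 0 \<in> I \<and>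
     (\<forall>x\<in>I. \<forall>y\<in>I. x + y \<in> I \<and> - x \<in> I) \<and>
     (\<forall>r\<in>R. \<forall>x\<in>I. r * x \<in> I)"

definition Zspan :: "'i set \<Rightarrow> ('i \<Rightarrow> complex) \<Rightarrow> complex set" where
  "Zspan A f = {\<Sum>a\<in>A. of_int (c a) * f a | c. True}"

definition basis_elt :: "nat \<Rightarrow> nat \<Rightarrow> nat \<times> nat \<Rightarrow> complex" where
  "basis_elt r p ij = (let (i, j) = ij in
     (if i = 0 \<and> j = (p - 1) div 2 then 2 else 1) * eR r i * bP p j)"

definition II :: "nat \<Rightarrow> nat \<Rightarrow> complex set" where
  "II r p = Zspan ({0..<2^(r-2)} \<times> {1..(p - 1) div 2}) (basis_elt r p)"

end

theory Submission
  imports Defs "Jordan_Normal_Form.Char_Poly" "HOL-Number_Theory.Residues"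
begin

hide_const (open) up_ring.coeff up_ring.monom



definition ZS :: "(nat \<Rightarrow> complex) \<Rightarrow> nat \<Rightarrow> complex set" where
  "ZS g N = {\<Sum>k<N. of_int (c k) * g k | c. True}"

lemma eig_alg_int:
  fixes x :: complex and A :: "int mat" and w :: "complex vec"
  assumes A: "A \<in> carrier_mat n n" and w: "w \<in> carrier_vec n" "w \<noteq> 0\<^sub>v n"
    and eq: "map_mat of_int A *\<^sub>v w = x \<cdot>\<^sub>v w"
  shows "algebraic_int x"
proof -
  have A': "(map_mat of_int A :: complex mat) \<in> carrier_mat n n" using A by auto
  have "eigenvector (map_mat of_int A) w x" unfolding eigenvector_def using A w eq by auto
  hence "eigenvalue (map_mat of_int A) x" unfolding eigenvalue_def by blast
  hence "poly (char_poly (map_mat of_int A)) x = 0" using eigenvalue_root_char_poly[OF A'] by simp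
  moreover have "char_poly (map_mat of_int A :: complex mat) = map_poly of_int (char_poly A)"
    by (rule of_int_hom.char_poly_hom[OF A])
  ultimately have "poly (map_poly of_int (char_poly A)) x = 0" by simp
  moreover have "lead_coeff (char_poly A) = 1" using degree_monic_char_poly[OF A] by simp
  ultimately show ?thesis unfolding algebraic_int_altdef_ipoly by blast
qed

lemma ZS_alg_int:
  assumes N: "N > 0" and g0: "g 0 = 1" and cl: "\<And>k. k < N \<Longrightarrow> x * g k \<in> ZS g N"
  shows "algebraic_int x"
proof -
  have "\<forall>k. \<exists>c. k < N \<longrightarrow> x * g k = (\<Sum>l<N. of_int (c l) * g l)"
    using cl unfolding ZS_def by blast
  then obtain c where c: "\<And>k. k < N \<Longrightarrow> x * g k = (\<Sum>l<N. of_int (c k l) * g l)"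
    by metis
  define A :: "int mat" where "A = mat N N (\<lambda>(k,l). c k l)"
  define w :: "complex vec" where "w = vec N g"
  have A: "A \<in> carrier_mat N N" unfolding A_def by auto
  have w: "w \<in> carrier_vec N" unfolding w_def by auto
  have w0: "w \<noteq> 0\<^sub>v N"
  proof
    assume "w = 0\<^sub>v N"
    hence "w $ 0 = 0" using N by simp
    thus False using N g0 unfolding w_def by simp
  qed
  have "map_mat of_int A *\<^sub>v w = x \<cdot>\<^sub>v w"
  proof (rule eq_vecI)
    fix k assume k: "k < dim_vec (x \<cdot>\<^sub>v w)"
    hence k': "k < N" using w by simp
    have "(map_mat of_int A *\<^sub>v w) $ k = (\<Sum>l<N. of_int (c k l) * g l)"
      using k' A w unfolding A_def w_def
      by (simp add: mult_mat_vec_def scalar_prod_def lessThan_atLeast0)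
    also have "\<dots> = x * g k" using c[OF k'] by simp
    finally show "(map_mat of_int A *\<^sub>v w) $ k = (x \<cdot>\<^sub>v w) $ k"
      using k' unfolding w_def by simp
  qed (use A w in auto)
  thus ?thesis using eig_alg_int[OF A w w0] by blast
qed




lemma ZS_0: "0 \<in> ZS g N"
  unfolding ZS_def by (rule CollectI, rule exI[of _ "\<lambda>_. 0"]) simp

lemma ZS_add: "a \<in> ZS g N \<Longrightarrow> b \<in> ZS g N \<Longrightarrow> a + b \<in> ZS g N"
proof -
  assume "a \<in> ZS g N" "b \<in> ZS g N"
  then obtain c d where "a = (\<Sum>k<N. of_int (c k) * g k)" "b = (\<Sum>k<N. of_int (d k) * g k)"
    unfolding ZS_def by blast
  hence "a + b = (\<Sum>k<N. of_int (c k + d k) * g k)" by (simp add: sum.distrib algebra_simps)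
  thus ?thesis unfolding ZS_def by (intro CollectI exI[of _ "\<lambda>k. c k + d k"]) simp
qed

lemma ZS_smult: "a \<in> ZS g N \<Longrightarrow> of_int e * a \<in> ZS g N"
proof -
  assume "a \<in> ZS g N"
  then obtain c where "a = (\<Sum>k<N. of_int (c k) * g k)" unfolding ZS_def by blast
  hence "of_int e * a = (\<Sum>k<N. of_int (e * c k) * g k)" by (simp add: sum_distrib_left algebra_simps)
  thus ?thesis unfolding ZS_def by (intro CollectI exI[of _ "\<lambda>k. e * c k"]) simp
qed

lemma ZS_sum: "finite A \<Longrightarrow> (\<And>a. a \<in> A \<Longrightarrow> h a \<in> ZS g N) \<Longrightarrow> (\<Sum>a\<in>A. h a) \<in> ZS g N"
  by (induction A rule: finite_induct) (auto intro: ZS_0 ZS_add)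

lemma ZS_gen: "k < N \<Longrightarrow> g k \<in> ZS g N"
proof -
  assume k: "k < N"
  have "(\<Sum>l<N. of_int (if l = k then 1 else 0) * g l) = (\<Sum>l<N. if l = k then g l else 0)"
    by (intro sum.cong) auto
  also have "\<dots> = g k" using k by (simp add: sum.delta)
  finally have "g k = (\<Sum>l<N. of_int (if l = k then 1 else 0) * g l)" by simp
  thus ?thesis unfolding ZS_def by (intro CollectI exI[of _ "\<lambda>l. if l = k then 1 else 0"]) simp
qed

lemma pow_span:
  fixes x :: complex and p :: "int poly"
  assumes px: "poly (map_poly of_int p) x = 0" and lc: "lead_coeff p = 1"
  shows "x ^ i \<in> ZS (\<lambda>a. x ^ a) (degree p)"
proof (induction i rule: less_induct)
  case (less i)
  define m where "m = degree p"
  show ?case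
  proof (cases "i < m")
    case True thus ?thesis using ZS_gen[of i m "\<lambda>a. x^a"] unfolding m_def by simp
  next
    case False
    have "0 = (\<Sum>a\<le>m. of_int (coeff p a) * x ^ a)"
      using px by (simp add: poly_altdef m_def degree_map_poly coeff_map_poly)
    also have "\<dots> = (\<Sum>a<m. of_int (coeff p a) * x ^ a) + x ^ m"
      using lc by (simp add: lessThan_Suc_atMost[symmetric] m_def)
    finally have xm: "x ^ m = - (\<Sum>a<m. of_int (coeff p a) * x ^ a)" by (simp add: eq_neg_iff_add_eq_0 add.commute)
    have "x ^ i = x ^ (i - m) * x ^ m" using False by (simp flip: power_add)
    also have "\<dots> = - (\<Sum>a<m. x ^ (i - m) * (of_int (coeff p a) * x ^ a))"
      by (simp add: xm sum_distrib_left)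
    also have "\<dots> = (\<Sum>a<m. of_int (- coeff p a) * x ^ (i - m + a))"
      by (simp add: sum_negf[symmetric] power_add mult_ac)
    also have "\<dots> \<in> ZS (\<lambda>a. x ^ a) (degree p)"
    proof (rule ZS_sum, simp, rule ZS_smult)
      fix a assume "a \<in> {..<m}"
      hence "i - m + a < i" using False by auto
      thus "x ^ (i - m + a) \<in> ZS (\<lambda>a. x ^ a) (degree p)" using less by blast
    qed
    finally show ?thesis .
  qed
qed

lemma alg_int_poly: "algebraic_int (x::complex) \<Longrightarrow> \<exists>p. poly (map_poly of_int p) x = 0 \<and> lead_coeff p = 1 \<and> degree p > 0"
proof -
  assume "algebraic_int x"
  then obtain p where p: "poly (map_poly of_int p) x = 0" "lead_coeff p = 1"
    unfolding algebraic_int_altdef_ipoly by blast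
  have "degree p > 0"
  proof (rule ccontr)
    assume "\<not> degree p > 0"
    hence d0: "degree p = 0" by simp
    hence "poly (map_poly of_int p) x = of_int (coeff p 0)" by (simp add: poly_altdef degree_map_poly coeff_map_poly)
    also have "coeff p 0 = 1" using p(2) d0 by simp
    finally show False using p(1) by simp
  qed
  thus ?thesis using p by blast
qed

lemma alg_int_closed:
  fixes x y :: complex
  assumes x: "algebraic_int x" and y: "algebraic_int y"
  shows "algebraic_int (x + y) \<and> algebraic_int (x * y)"
proof -
  obtain p where p: "poly (map_poly of_int p) x = 0" "lead_coeff p = 1" "degree p > 0"
    using alg_int_poly[OF x] by blast
  obtain q where q: "poly (map_poly of_int q) y = 0" "lead_coeff q = 1" "degree q > 0"
    using alg_int_poly[OF y] by blast
  define m where "m = degree p"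
  define n where "n = degree q"
  define g where "g = (\<lambda>k. x ^ (k div n) * y ^ (k mod n))"
  define N where "N = m * n"
  have N: "N > 0" using p q unfolding N_def m_def n_def by simp
  have g0: "g 0 = 1" unfolding g_def by simp
  have mon: "x ^ i * y ^ j \<in> ZS g N" for i j
  proof -
    obtain c where c: "x ^ i = (\<Sum>a<m. of_int (c a) * x ^ a)"
      using pow_span[OF p(1,2), of i] unfolding ZS_def m_def by blast
    obtain d where d: "y ^ j = (\<Sum>b<n. of_int (d b) * y ^ b)"
      using pow_span[OF q(1,2), of j] unfolding ZS_def n_def by blast
    have "x ^ i * y ^ j = (\<Sum>a<m. \<Sum>b<n. of_int (c a * d b) * (x ^ a * y ^ b))"
      unfolding c d by (simp add: sum_product of_int_mult mult_ac)
    also have "\<dots> \<in> ZS g N"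
    proof (intro ZS_sum ZS_smult, simp, simp)
      fix a b assume ab: "a \<in> {..<m}" "b \<in> {..<n}"
      have "a * n + b < a * n + n" using ab by simp
      also have "\<dots> = Suc a * n" by simp
      also have "\<dots> \<le> m * n" using ab by (intro mult_right_mono) auto
      finally have "a * n + b < N" unfolding N_def .
      moreover have "g (a * n + b) = x ^ a * y ^ b" using ab unfolding g_def by simp
      ultimately show "x ^ a * y ^ b \<in> ZS g N" using ZS_gen by metis
    qed
    finally show ?thesis .
  qed
  have "algebraic_int (x + y)"
  proof (rule ZS_alg_int[where g=g, OF N g0])
    fix k assume "k < N"
    have "(x + y) * g k = x ^ Suc (k div n) * y ^ (k mod n) + x ^ (k div n) * y ^ Suc (k mod n)"
      unfolding g_def by (simp add: algebra_simps)
    thus "(x + y) * g k \<in> ZS g N" using mon ZS_add by metis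
  qed
  moreover have "algebraic_int (x * y)"
  proof (rule ZS_alg_int[where g=g, OF N g0])
    fix k assume "k < N"
    have "(x * y) * g k = x ^ Suc (k div n) * y ^ Suc (k mod n)"
      unfolding g_def by (simp add: algebra_simps)
    thus "(x * y) * g k \<in> ZS g N" using mon by metis
  qed
  ultimately show ?thesis by blast
qed

lemma ai_add [intro]: "algebraic_int (x::complex) \<Longrightarrow> algebraic_int y \<Longrightarrow> algebraic_int (x + y)"
  using alg_int_closed by blast
lemma ai_mult [intro]: "algebraic_int (x::complex) \<Longrightarrow> algebraic_int y \<Longrightarrow> algebraic_int (x * y)"
  using alg_int_closed by blast
lemma ai_diff [intro]: "algebraic_int (x::complex) \<Longrightarrow> algebraic_int y \<Longrightarrow> algebraic_int (x - y)"
  using ai_add[of x "-y"] by simp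
lemma ai_power [intro]: "algebraic_int (x::complex) \<Longrightarrow> algebraic_int (x ^ n)"
  by (induction n) auto
lemma ai_sum [intro]: "(\<And>a. a \<in> A \<Longrightarrow> algebraic_int (f a :: complex)) \<Longrightarrow> algebraic_int (sum f A)"
  by (induction A rule: infinite_finite_induct) auto




lemma zeta_pow: "zeta n ^ k = cis (2 * pi * real k / real n)"
  unfolding zeta_def Complex.DeMoivre by (simp add: field_simps)

lemma zeta_pow_n: "n > 0 \<Longrightarrow> zeta n ^ n = 1"
  unfolding zeta_pow by simp

lemma zeta_pow_mod: "n > 0 \<Longrightarrow> zeta n ^ k = zeta n ^ (k mod n)"
proof -
  assume n: "n > 0"
  have "zeta n ^ k = zeta n ^ (n * (k div n) + k mod n)" by simp
  also have "\<dots> = (zeta n ^ n) ^ (k div n) * zeta n ^ (k mod n)" by (simp only: power_add power_mult)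
  also have "\<dots> = zeta n ^ (k mod n)" using n by (simp add: zeta_pow_n)
  finally show ?thesis .
qed

lemma zeta_pow_eq_1: assumes n: "n > 0" shows "zeta n ^ k = 1 \<longleftrightarrow> n dvd k"
proof
  assume "n dvd k"
  then obtain j where "k = n * j" by blast
  thus "zeta n ^ k = 1" using n by (simp add: power_mult zeta_pow_n)
next
  assume h: "zeta n ^ k = 1"
  have "zeta n ^ k = zeta n ^ (k mod n)" using n by (rule zeta_pow_mod)
  hence "cis (2 * pi * real (k mod n) / real n) = cis (2 * pi * real 0 / real n)"
    using h by (simp add: zeta_pow)
  moreover have "inj_on (\<lambda>k. cis (2 * pi * real k / real n)) {..<n}"
    using Complex.bij_betw_roots_unity[OF n] by (simp add: bij_betw_def)
  ultimately have "k mod n = 0" using n by (auto simp: inj_on_def)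
  thus "n dvd k" by auto
qed

lemma zeta_ne0: "zeta n \<noteq> 0"
  unfolding zeta_def by simp

lemma alg_int_root_unity:
  assumes "n > 0" "z ^ n = (1::complex)" shows "algebraic_int z"
  by (rule algebraic_int_root[where p = "Polynomial.monom 1 n" and y = 1])
     (use assms in \<open>auto simp: poly_monom degree_monom_eq coeff_monom\<close>)

lemma alg_int_zeta_pow: "n > 0 \<Longrightarrow> algebraic_int (zeta n ^ k)"
proof -
  assume n: "n > 0"
  have "(zeta n ^ k) ^ n = (zeta n ^ n) ^ k" by (simp only: power_mult[symmetric] mult.commute)
  also have "\<dots> = 1" using n by (simp add: zeta_pow_n)
  finally show ?thesis using alg_int_root_unity[OF n] by blast
qed

lemma inverse_zeta_pow: "n > 0 \<Longrightarrow> inverse (zeta n ^ k) = zeta n ^ (k * (n - 1))"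
proof -
  assume n: "n > 0"
  have "zeta n ^ k * zeta n ^ (k * (n - 1)) = zeta n ^ (k * n)"
  proof -
    have "k + k * (n - 1) = k * n" using n by (cases n) (auto simp: algebra_simps)
    thus ?thesis by (simp flip: power_add)
  qed
  also have "\<dots> = (zeta n ^ n) ^ k" by (simp only: power_mult[symmetric] mult.commute)
  also have "\<dots> = 1" using n by (simp add: zeta_pow_n)
  finally show ?thesis by (simp add: inverse_unique)
qed

lemma sum_zeta_pow: assumes n: "n > 0" and nd: "\<not> n dvd s"
  shows "(\<Sum>i<n. (zeta n ^ s) ^ i) = 0"
proof -
  have ne: "zeta n ^ s \<noteq> 1" using zeta_pow_eq_1[OF n] nd by simp
  have "(zeta n ^ s) ^ n = (zeta n ^ n) ^ s" by (simp only: power_mult[symmetric] mult.commute)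
  hence "(zeta n ^ s) ^ n = 1" using n by (simp add: zeta_pow_n)
  thus ?thesis using geometric_sum[OF ne, of n] by simp
qed

definition ppi :: "nat \<Rightarrow> complex" where "ppi p = 1 - zeta p"

context
  fixes p :: nat
  assumes prime_p: "prime p" and p5: "p \<ge> 5"
begin

abbreviation "v \<equiv> zeta p"
abbreviation "\<pi> \<equiv> ppi p"

lemma v_eq: "v = 1 - \<pi>" unfolding ppi_def by simp

lemma p_pos: "p > 0" using p5 by simp
lemma p_odd: "odd p" using prime_odd_nat[OF prime_p] p5 by simp

lemma v_p: "v ^ p = 1" using zeta_pow_n[OF p_pos] .

lemma v_ne1: "v \<noteq> 1" using zeta_pow_eq_1[OF p_pos, of 1] p5 by auto

lemma pi_ne0: "\<pi> \<noteq> 0" using v_ne1 unfolding ppi_def by simp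

lemma alg_int_pi: "algebraic_int \<pi>" using alg_int_zeta_pow[OF p_pos, of 1] unfolding ppi_def by auto

lemma W_exists: "\<exists>W. algebraic_int W \<and> \<pi> ^ (p - 1) = of_nat p * (\<pi> * W - 1)"
proof -
  define c where "c = (\<lambda>k. (p choose k) div p)"
  have cdiv: "p choose k = p * c k" if "k \<in> {2..<p}" for k
    using dvd_choose_prime[of k p] that prime_p unfolding c_def by auto
  define W where "W = (\<Sum>k\<in>{2..<p}. of_nat (c k) * (- \<pi>) ^ (k - 2))"
  have m: "algebraic_int (- \<pi>)" using alg_int_pi by (simp only: algebraic_int_minus_iff)
  have aW: "algebraic_int W" unfolding W_def by (rule ai_sum, rule ai_mult, simp, rule ai_power, rule m)
  define f where "f = (\<lambda>k. of_nat (p choose k) * (- \<pi>) ^ k * (1::complex) ^ (p - k))"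
  have "1 = (- \<pi> + 1) ^ p" using v_p unfolding ppi_def by simp
  also have "\<dots> = (\<Sum>k\<le>p. f k)" unfolding f_def by (rule binomial_ring)
  also have "{..p} = insert 0 (insert 1 (insert p {2..<p}))" using p5 by auto
  also have "(\<Sum>k\<in>insert 0 (insert 1 (insert p {2..<p})). f k) = f 0 + f 1 + f p + (\<Sum>k\<in>{2..<p}. f k)"
    using p5 by (simp add: sum.insert)
  also have "(\<Sum>k\<in>{2..<p}. f k) = (\<Sum>k\<in>{2..<p}. of_nat p * \<pi>^2 * (of_nat (c k) * (- \<pi>) ^ (k - 2)))"
  proof (rule sum.cong[OF refl])
    fix k assume k: "k \<in> {2..<p}"
    have k2: "2 + (k - 2) = k" using k by auto
    have "(- \<pi>) ^ k = (- \<pi>) ^ (2 + (k - 2))" by (simp only: k2)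
    also have "\<dots> = (- \<pi>)^2 * (- \<pi>) ^ (k - 2)" by (rule power_add)
    finally have "(- \<pi>) ^ k = (- \<pi>)^2 * (- \<pi>) ^ (k - 2)" .
    thus "f k = of_nat p * \<pi>^2 * (of_nat (c k) * (- \<pi>) ^ (k - 2))"
      unfolding f_def cdiv[OF k] by (simp add: algebra_simps)
  qed
  also have "\<dots> = of_nat p * \<pi>^2 * W" unfolding W_def by (simp add: sum_distrib_left)
  also have "f 0 = 1" unfolding f_def by simp
  also have "f 1 = - of_nat p * \<pi>" unfolding f_def by (simp add: algebra_simps)
  also have "f p = - (\<pi> ^ p)" unfolding f_def using p_odd by simp
  finally have h1: "1 = 1 + (- of_nat p * \<pi> + - (\<pi> ^ p) + of_nat p * \<pi>^2 * W)"
    by (simp only: add.assoc)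
  hence h1': "- of_nat p * \<pi> + - (\<pi> ^ p) + of_nat p * \<pi>^2 * W = 0" by simp
  have h2: "\<pi> ^ p = \<pi> * \<pi> ^ (p - 1)" using p_pos by (metis Suc_diff_1 power_Suc)
  have e1: "\<pi> * (\<pi> ^ (p - 1) - of_nat p * (\<pi> * W - 1)) = - (- of_nat p * \<pi> + - (\<pi> ^ p) + of_nat p * \<pi>^2 * W)"
    by (simp add: h2 algebra_simps power2_eq_square)
  have eq: "\<pi> * (\<pi> ^ (p - 1) - of_nat p * (\<pi> * W - 1)) = 0" by (simp only: e1 h1' minus_zero)
  hence "\<pi> ^ (p - 1) = of_nat p * (\<pi> * W - 1)" using pi_ne0 by simp
  thus ?thesis using aW by blast
qed

end



context
  fixes p :: nat
  assumes prime_p: "prime p" and p5: "p \<ge> 5"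
begin


lemmas W_ex = W_exists[OF prime_p p5]
lemmas pi_ne0' = pi_ne0[OF prime_p p5]
lemmas alg_int_pi' = alg_int_pi[OF prime_p p5]
lemmas p_pos' = p_pos[OF prime_p p5]

lemma E2: "algebraic_int ((ppi p) ^ (p - 1) / of_nat p)"
proof -
  obtain W where W: "algebraic_int W" "(ppi p) ^ (p - 1) = of_nat p * ((ppi p) * W - 1)" using W_ex by blast
  have "(ppi p) ^ (p - 1) / of_nat p = (ppi p) * W - 1" using W(2) p_pos' by simp
  thus ?thesis using W(1) alg_int_pi' by auto
qed

lemma E1: "j \<le> p - 1 \<Longrightarrow> algebraic_int (of_nat p / (ppi p) ^ j)"
proof (induction j)
  case 0 thus ?case by simp
next
  case (Suc j)
  obtain W where W: "algebraic_int W" "(ppi p) ^ (p - 1) = of_nat p * ((ppi p) * W - 1)" using W_ex by blast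
  have pj: "p - 1 = Suc j + (p - 2 - j)" using Suc.prems by simp
  have "of_nat p = of_nat p * (ppi p) * W - (ppi p) ^ (p - 1)" using W(2) by (simp add: algebra_simps)
  hence eq: "of_nat p / (ppi p) ^ Suc j = (of_nat p / (ppi p) ^ j) * W - (ppi p) ^ (p - 2 - j)"
    using pi_ne0' by (subst (asm) pj) (simp add: field_simps power_add)
  have "algebraic_int ((of_nat p / (ppi p) ^ j) * W - (ppi p) ^ (p - 2 - j))"
    using Suc W(1) alg_int_pi' by (intro ai_diff ai_mult ai_power) auto
  thus ?case by (simp only: eq)
qed

lemma L_dvd:
  assumes "algebraic_int (of_int n / (ppi p))"
  shows "int p dvd n"
proof -
  have "algebraic_int ((of_int n / (ppi p)) ^ (p - 1) * ((ppi p) ^ (p - 1) / of_nat p))"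
    by (rule ai_mult[OF ai_power[OF assms] E2])
  also have "(of_int n / (ppi p)) ^ (p - 1) * ((ppi p) ^ (p - 1) / of_nat p) = of_int (n ^ (p - 1)) / of_int (int p)"
    using pi_ne0' by (simp add: power_divide)
  finally have a: "algebraic_int (of_int (n ^ (p - 1)) / of_int (int p) :: complex)" .
  have "(of_int (n ^ (p - 1)) / of_int (int p) :: complex) \<in> \<rat>" by simp
  hence "(of_int (n ^ (p - 1)) / of_int (int p) :: complex) \<in> \<int>"
    using rational_algebraic_int_is_int a by blast
  then obtain m where m: "(of_int (n ^ (p - 1)) / of_int (int p) :: complex) = of_int m" by (auto elim: Ints_cases)
  hence "(of_int (n ^ (p - 1)) :: complex) = of_int (int p * m)" using p_pos' by (simp add: field_simps)
  hence "n ^ (p - 1) = int p * m" by (simp only: of_int_eq_iff)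
  hence "int p dvd n ^ (p - 1)" by simp
  moreover have "prime (int p)" using prime_p by simp
  ultimately show ?thesis using prime_dvd_power by blast
qed

lemma CORE:
  fixes h :: "int poly"
  assumes dh: "degree h \<le> p - 2" and h0: "poly (map_poly of_int h) (ppi p) = 0"
  shows "int p dvd coeff h k"
proof (rule ccontr)
  assume "\<not> int p dvd coeff h k"
  define k0 where "k0 = (LEAST k. \<not> int p dvd coeff h k)"
  have nd: "\<not> int p dvd coeff h k0" unfolding k0_def by (rule LeastI, fact)
  have below: "int p dvd coeff h k" if "k < k0" for k
    using not_less_Least[OF that[unfolded k0_def]] by simp
  have "k0 \<le> degree h"
  proof (rule ccontr)
    assume "\<not> k0 \<le> degree h"
    hence "coeff h k0 = 0" by (simp add: coeff_eq_0)
    thus False using nd by simp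
  qed
  hence k0d: "k0 \<le> p - 2" using dh by simp
  define d where "d = p - 2"
  define x where "x = ppi p"
  define hc where "hc = (\<lambda>k. complex_of_int (coeff h k))"
  have x0: "x \<noteq> 0" unfolding x_def by (rule pi_ne0')
  have "map_poly (of_int :: int \<Rightarrow> complex) h = (\<Sum>i\<le>d. Polynomial.monom (coeff (map_poly of_int h) i) i)"
    by (rule poly_as_sum_of_monoms'[symmetric]) (use dh in \<open>simp add: d_def degree_map_poly\<close>)
  hence "poly (map_poly (of_int :: int \<Rightarrow> complex) h) x = (\<Sum>i\<le>d. hc i * x ^ i)"
    by (metis (no_types, lifting) poly_sum poly_monom sum.cong coeff_map_poly of_int_0 hc_def)
  hence s0: "(\<Sum>i\<le>d. hc i * x ^ i) = 0" using h0 unfolding x_def by simp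
  have split: "{..d} = {..<k0} \<union> {k0} \<union> {k0<..d}" using k0d unfolding d_def by auto
  have "(\<Sum>i\<le>d. hc i * x ^ i) = (\<Sum>i<k0. hc i * x ^ i) + hc k0 * x ^ k0 + (\<Sum>i\<in>{k0<..d}. hc i * x ^ i)"
    unfolding split by (subst sum.union_disjoint, auto)+
  hence s1: "(\<Sum>i<k0. hc i * x ^ i) + (\<Sum>i\<in>{k0<..d}. hc i * x ^ i) = - (hc k0 * x ^ k0)"
    using s0 by (simp add: algebra_simps eq_neg_iff_add_eq_0)
  define X where "X = (\<Sum>i<k0. of_int (coeff h i div int p) * (of_nat p / x ^ (k0 + 1 - i)))
      + (\<Sum>i\<in>{k0<..d}. hc i * x ^ (i - k0 - 1))"
  have aX: "algebraic_int X" unfolding X_def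
  proof (intro ai_add ai_sum ai_mult ai_power)
    fix i assume "i \<in> {..<k0}"
    hence "k0 + 1 - i \<le> p - 1" using k0d by auto
    thus "algebraic_int (of_nat p / x ^ (k0 + 1 - i))" unfolding x_def by (rule E1)
  qed (auto simp: hc_def x_def alg_int_pi')
  have t1: "of_int (coeff h i div int p) * (of_nat p / x ^ (k0 + 1 - i)) * x ^ (k0 + 1) = hc i * x ^ i"
    if "i < k0" for i
  proof -
    have e: "x ^ (k0 + 1) = x ^ (k0 + 1 - i) * x ^ i" using that by (simp flip: power_add)
    have c: "of_int (coeff h i div int p) * of_nat p = hc i"
      using below[OF that] unfolding hc_def
      by (metis dvd_div_mult_self of_int_mult of_int_of_nat_eq)
    show ?thesis unfolding e using x0 by (simp add: c[symmetric] field_simps)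
  qed
  have t2: "hc i * x ^ (i - k0 - 1) * x ^ (k0 + 1) = hc i * x ^ i" if "i \<in> {k0<..d}" for i
  proof -
    have ee: "i - k0 - 1 + (k0 + 1) = i" using that by auto
    have "x ^ (i - k0 - 1) * x ^ (k0 + 1) = x ^ i" by (simp only: power_add[symmetric] ee)
    thus ?thesis by (simp only: mult.assoc)
  qed
  have "X * x ^ (k0 + 1) = (\<Sum>i<k0. of_int (coeff h i div int p) * (of_nat p / x ^ (k0 + 1 - i)) * x ^ (k0 + 1))
      + (\<Sum>i\<in>{k0<..d}. hc i * x ^ (i - k0 - 1) * x ^ (k0 + 1))"
    unfolding X_def by (simp only: distrib_right sum_distrib_right)
  also have "\<dots> = (\<Sum>i<k0. hc i * x ^ i) + (\<Sum>i\<in>{k0<..d}. hc i * x ^ i)"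
    by (intro arg_cong2[where f="(+)"] sum.cong refl) (use t1 t2 in auto)
  also have "\<dots> = - (hc k0 * x ^ k0)" by (rule s1)
  finally have fx: "X * x ^ (k0 + 1) = - (hc k0 * x ^ k0)" .
  hence "(hc k0 + X * x) * x ^ k0 = 0" by (simp add: algebra_simps)
  hence "hc k0 + X * x = 0" using x0 by simp
  hence "hc k0 = - X * x" by (simp add: eq_neg_iff_add_eq_0)
  hence "hc k0 / x = - X" using x0 by simp
  hence "algebraic_int (of_int (coeff h k0) / ppi p)" using aX unfolding hc_def x_def by simp
  hence "int p dvd coeff h k0" by (rule L_dvd)
  thus False using nd by simp
qed

end



lemma poly_of_int_sum:
  fixes q :: "int poly"
  assumes "degree q \<le> n"
  shows "poly (map_poly of_int q) (z::complex) = (\<Sum>i\<le>n. of_int (coeff q i) * z ^ i)"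
proof -
  have "map_poly (of_int :: int \<Rightarrow> complex) q = (\<Sum>i\<le>n. Polynomial.monom (coeff (map_poly of_int q) i) i)"
    by (rule poly_as_sum_of_monoms'[symmetric]) (use assms in \<open>simp add: degree_map_poly\<close>)
  hence "poly (map_poly (of_int :: int \<Rightarrow> complex) q) z = (\<Sum>i\<le>n. coeff (map_poly of_int q) i * z ^ i)"
    by (metis (no_types, lifting) poly_sum poly_monom sum.cong)
  thus ?thesis by (simp add: coeff_map_poly)
qed

lemma poly_of_int_pcompose:
  "poly (map_poly (of_int :: int \<Rightarrow> complex) (pcompose T q)) z = poly (map_poly of_int T) (poly (map_poly of_int q) z)"
  by (simp add: of_int_hom.map_poly_pcompose poly_pcompose)

context
  fixes p :: nat
  assumes prime_p: "prime p" and p5: "p \<ge> 5"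
begin

lemmas p_pos'' = p_pos[OF prime_p p5]

lemma DESC:
  "\<And>h :: int poly. degree h \<le> p - 2 \<Longrightarrow> poly (map_poly of_int h) (ppi p) = 0 \<Longrightarrow> int p ^ n dvd coeff h k"
proof (induction n arbitrary: k)
  case 0 thus ?case by simp
next
  case (Suc n)
  define h1 where "h1 = map_poly (\<lambda>c. c div int p) h"
  have ch: "coeff h i = int p * coeff h1 i" for i
    using CORE[OF prime_p p5 Suc.prems, of i] unfolding h1_def by (simp add: coeff_map_poly)
  have hs: "h = Polynomial.smult (int p) h1" by (rule poly_eqI) (simp add: ch)
  have "poly (map_poly (of_int :: int \<Rightarrow> complex) h) (ppi p) = of_nat p * poly (map_poly of_int h1) (ppi p)"
    unfolding hs by (simp add: of_int_hom.map_poly_hom_smult)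
  hence z: "poly (map_poly of_int h1) (ppi p) = (0::complex)" using Suc.prems p_pos'' by simp
  have "degree h1 \<le> p - 2" using Suc.prems(1) unfolding h1_def by (meson degree_map_poly_le order_trans)
  hence "int p ^ n dvd coeff h1 k" using Suc.IH z by blast
  thus ?case unfolding ch by simp
qed

lemma DESC0:
  fixes h :: "int poly"
  assumes "degree h \<le> p - 2" "poly (map_poly of_int h) (ppi p) = 0"
  shows "h = 0"
proof (rule poly_eqI)
  fix k
  define c where "c = coeff h k"
  have d: "int p ^ nat \<bar>c\<bar> dvd c" using DESC[OF assms] unfolding c_def by blast
  have "\<bar>c\<bar> < 2 ^ nat \<bar>c\<bar>"
    by (metis abs_ge_zero int_nat_eq less_exp of_nat_less_iff of_nat_numeral of_nat_power)
  also have "(2::int) ^ nat \<bar>c\<bar> \<le> int p ^ nat \<bar>c\<bar>" using p5 by (intro power_mono) auto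
  finally have lt: "\<bar>c\<bar> < \<bar>int p ^ nat \<bar>c\<bar>\<bar>" by simp
  show "coeff h k = coeff 0 k"
  proof (rule ccontr)
    assume "coeff h k \<noteq> coeff 0 k"
    hence "c \<noteq> 0" unfolding c_def by simp
    hence "\<bar>int p ^ nat \<bar>c\<bar>\<bar> \<le> \<bar>c\<bar>" using d by (rule dvd_imp_le_int)
    thus False using lt by simp
  qed
qed

lemma INDEP:
  fixes F :: "nat \<Rightarrow> int"
  assumes s: "(\<Sum>i<p. of_int (F i) * zeta p ^ i) = 0"
  shows "i < p \<Longrightarrow> F i = F (p - 1)"
proof -
  define G where "G = (\<lambda>i. F i - F (p - 1))"
  have "(\<Sum>i<p. of_int (G i) * zeta p ^ i) = (\<Sum>i<p. of_int (F i) * zeta p ^ i) - of_int (F (p - 1)) * (\<Sum>i<p. (zeta p ^ 1) ^ i)"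
    unfolding G_def by (simp add: algebra_simps sum_subtractf sum_distrib_left sum_distrib_right)
  also have "(\<Sum>i<p. (zeta p ^ 1) ^ i) = 0" by (rule sum_zeta_pow[OF p_pos'']) (use p5 in auto)
  finally have sG: "(\<Sum>i<p. of_int (G i) * zeta p ^ i) = 0" using s by simp
  define T where "T = (\<Sum>i<p - 1. Polynomial.monom (G i) i)"
  have cT: "coeff T n = (if n < p - 1 then G n else 0)" for n
    unfolding T_def by (simp add: coeff_sum coeff_monom)
  have dT: "degree T \<le> p - 2" by (rule degree_le) (auto simp: cT)
  have "poly (map_poly of_int T) (zeta p) = (\<Sum>i\<le>p - 2. of_int (coeff T i) * zeta p ^ i)"
    by (rule poly_of_int_sum[OF dT])
  also have "\<dots> = (\<Sum>i<p - 1. of_int (G i) * zeta p ^ i)"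
    using p5 by (intro sum.cong) (auto simp: cT)
  also have "\<dots> = (\<Sum>i<p. of_int (G i) * zeta p ^ i)"
  proof -
    have "{..<p} = insert (p - 1) {..<p - 1}" using p5 by auto
    thus ?thesis by (simp add: G_def)
  qed
  finally have T0: "poly (map_poly of_int T) (zeta p) = 0" using sG by simp
  define h where "h = pcompose T [:1, -1:]"
  have dh: "degree h \<le> p - 2" unfolding h_def using degree_pcompose_le[of T "[:1,-1:]"] dT by simp
  have "poly (map_poly of_int h) (ppi p) = poly (map_poly of_int T) (1 - ppi p)"
    unfolding h_def poly_of_int_pcompose by simp
  also have "1 - ppi p = zeta p" unfolding ppi_def by simp
  finally have "poly (map_poly of_int h) (ppi p) = (0::complex)" using T0 by simp
  hence h0: "h = 0" using DESC0 dh by blast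
  have "T = pcompose T (pcompose [:1, -1:] [:1, -1:])" by (simp add: pcompose_pCons)
  also have "\<dots> = pcompose h [:1, -1:]" unfolding h_def by (rule pcompose_assoc)
  also have "\<dots> = 0" using h0 by simp
  finally have "T = 0" .
  hence "G i = 0" if "i < p - 1" for i using cT[of i] that by simp
  moreover assume "i < p"
  ultimately show "F i = F (p - 1)" unfolding G_def by (cases "i = p - 1") auto
qed

end



lemma pow_mod_root: "z ^ p = (1::complex) \<Longrightarrow> z ^ k = z ^ (k mod p)"
proof -
  assume z: "z ^ p = 1"
  have "z ^ k = z ^ (p * (k div p) + k mod p)" by simp
  also have "\<dots> = (z ^ p) ^ (k div p) * z ^ (k mod p)" by (simp only: power_add power_mult)
  also have "\<dots> = z ^ (k mod p)" using z by simp
  finally show ?thesis .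
qed

lemma group_root:
  fixes f :: "int poly"
  assumes p: "p > 0" and z: "z ^ p = (1::complex)"
  shows "poly (map_poly of_int f) z =
    (\<Sum>i<p. of_int (\<Sum>k\<in>{k\<in>{..degree f}. k mod p = i}. coeff f k) * z ^ i)"
proof -
  have "poly (map_poly of_int f) z = (\<Sum>k\<le>degree f. of_int (coeff f k) * z ^ k)"
    by (rule poly_of_int_sum) simp
  also have "\<dots> = (\<Sum>k\<le>degree f. of_int (coeff f k) * z ^ (k mod p))"
    using pow_mod_root[OF z] by simp
  also have "\<dots> = (\<Sum>i<p. \<Sum>k\<in>{k\<in>{..degree f}. k mod p = i}. of_int (coeff f k) * z ^ (k mod p))"
    by (rule sum.group[symmetric]) (use p in auto)
  also have "\<dots> = (\<Sum>i<p. \<Sum>k\<in>{k\<in>{..degree f}. k mod p = i}. of_int (coeff f k) * z ^ i)"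
    by (intro sum.cong refl) auto
  also have "\<dots> = (\<Sum>i<p. of_int (\<Sum>k\<in>{k\<in>{..degree f}. k mod p = i}. coeff f k) * z ^ i)"
    by (simp add: sum_distrib_right)
  finally show ?thesis .
qed

context
  fixes p :: nat
  assumes prime_p: "prime p" and p5: "p \<ge> 5"
begin

lemmas p_pos3 = p_pos[OF prime_p p5]

lemma VANISH:
  fixes f :: "int poly"
  assumes f0: "poly (map_poly of_int f) (zeta p) = 0" and s: "\<not> p dvd s"
  shows "poly (map_poly of_int f) (zeta p ^ s) = (0::complex)"
proof -
  define Fg where "Fg = (\<lambda>i. \<Sum>k\<in>{k\<in>{..degree f}. k mod p = i}. coeff f k)"
  have vp: "zeta p ^ p = 1" using zeta_pow_n[OF p_pos3] .
  have gr: "poly (map_poly of_int f) z = (\<Sum>i<p. of_int (Fg i) * z ^ i)" if "z ^ p = 1" for z :: complex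
    unfolding Fg_def by (rule group_root[OF p_pos3 that])
  have sF: "(\<Sum>i<p. of_int (Fg i) * zeta p ^ i) = (0::complex)"
    using gr[OF vp] f0 by (simp only:)
  have eq: "Fg i = Fg (p - 1)" if "i < p" for i by (rule INDEP[OF prime_p p5, of Fg, OF sF that])
  have "(zeta p ^ s) ^ p = (zeta p ^ p) ^ s" by (simp only: power_mult[symmetric] mult.commute)
  hence vs: "(zeta p ^ s) ^ p = 1" using vp by simp
  have "poly (map_poly of_int f) (zeta p ^ s) = (\<Sum>i<p. of_int (Fg i) * (zeta p ^ s) ^ i)"
    by (rule gr[OF vs])
  also have "\<dots> = (\<Sum>i<p. of_int (Fg (p - 1)) * (zeta p ^ s) ^ i)"
  proof (rule sum.cong[OF refl])
    fix i assume "i \<in> {..<p}"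
    thus "of_int (Fg i) * (zeta p ^ s) ^ i = of_int (Fg (p - 1)) * (zeta p ^ s) ^ i" using eq[of i] by simp
  qed
  also have "\<dots> = of_int (Fg (p - 1)) * (\<Sum>i<p. (zeta p ^ s) ^ i)" by (simp add: sum_distrib_left)
  also have "(\<Sum>i<p. (zeta p ^ s) ^ i) = 0" by (rule sum_zeta_pow[OF p_pos3 s])
  finally show ?thesis by simp
qed

lemma CONJ:
  fixes G :: "int poly"
  assumes a: "algebraic_int (poly (map_poly of_int G) (zeta p) / 2)" and s: "\<not> p dvd s"
  shows "algebraic_int (poly (map_poly of_int G) (zeta p ^ s) / 2)"
proof -
  obtain P where P: "poly (map_poly of_int P) (poly (map_poly of_int G) (zeta p) / 2) = (0::complex)"
      "lead_coeff P = 1"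
    using a unfolding algebraic_int_altdef_ipoly by blast
  define D where "D = degree P"
  define P' where "P' = (\<Sum>j\<le>D. Polynomial.monom (coeff P j * 2 ^ (D - j)) j)"
  have cP': "coeff P' n = (if n \<le> D then coeff P n * 2 ^ (D - n) else 0)" for n
    unfolding P'_def by (simp add: coeff_sum coeff_monom)
  have dP': "degree P' \<le> D" by (rule degree_le) (auto simp: cP')
  have key: "poly (map_poly of_int P') (2 * y) = 2 ^ D * poly (map_poly of_int P) (y::complex)" for y
  proof -
    have "poly (map_poly of_int P') (2 * y) = (\<Sum>j\<le>D. of_int (coeff P' j) * (2 * y) ^ j)"
      by (rule poly_of_int_sum[OF dP'])
    also have "\<dots> = (\<Sum>j\<le>D. 2 ^ D * (of_int (coeff P j) * y ^ j))"
    proof (intro sum.cong refl)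
      fix j assume j: "j \<in> {..D}"
      have h: "(2::complex) ^ (D - j) * 2 ^ j = 2 ^ D" using j by (simp flip: power_add)
      have "of_int (coeff P' j) * (2 * y) ^ j = of_int (coeff P j) * (2::complex) ^ (D - j) * (2 ^ j * y ^ j)"
        using j by (simp add: cP' power_mult_distrib)
      also have "\<dots> = ((2::complex) ^ (D - j) * 2 ^ j) * (of_int (coeff P j) * y ^ j)" by (simp only: ac_simps)
      also have "\<dots> = 2 ^ D * (of_int (coeff P j) * y ^ j)" by (simp only: h)
      finally show "of_int (coeff P' j) * (2 * y) ^ j = 2 ^ D * (of_int (coeff P j) * y ^ j)" .
    qed
    also have "\<dots> = 2 ^ D * poly (map_poly of_int P) y"
      by (simp add: sum_distrib_left poly_of_int_sum[of P D] D_def)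
    finally show ?thesis .
  qed
  define Q where "Q = pcompose P' G"
  have Qz: "poly (map_poly of_int Q) z = 2 ^ D * poly (map_poly of_int P) (poly (map_poly of_int G) z / 2)" for z :: complex
  proof -
    have "poly (map_poly of_int Q) z = poly (map_poly of_int P') (2 * (poly (map_poly of_int G) z / 2))"
      unfolding Q_def poly_of_int_pcompose by simp
    thus ?thesis by (simp only: key)
  qed
  have "poly (map_poly of_int Q) (zeta p) = (0::complex)" using Qz P(1) by simp
  hence "poly (map_poly of_int Q) (zeta p ^ s) = (0::complex)" by (rule VANISH[OF _ s])
  hence "poly (map_poly of_int P) (poly (map_poly of_int G) (zeta p ^ s) / 2) = (0::complex)"
    using Qz[of "zeta p ^ s"] by simp
  thus ?thesis unfolding algebraic_int_altdef_ipoly using P(2) by blast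
qed

lemma TRACE:
  fixes G :: "int poly" and T :: int
  assumes a: "algebraic_int (poly (map_poly of_int G) (zeta p) / 2)"
    and t: "(\<Sum>s\<in>{1..<p}. poly (map_poly of_int G) (zeta p ^ s)) = (of_int T :: complex)"
  shows "even T"
proof -
  have "algebraic_int (\<Sum>s\<in>{1..<p}. poly (map_poly of_int G) (zeta p ^ s) / 2)"
  proof (rule ai_sum)
    fix s assume "s \<in> {1..<p}"
    hence "\<not> p dvd s" by (auto dest: dvd_imp_le)
    thus "algebraic_int (poly (map_poly of_int G) (zeta p ^ s) / 2)" by (rule CONJ[OF a])
  qed
  also have "(\<Sum>s\<in>{1..<p}. poly (map_poly of_int G) (zeta p ^ s) / 2) = of_int T / (2::complex)"
    using t by (simp add: sum_divide_distrib[symmetric])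
  finally have "algebraic_int (of_int T / (2::complex))" .
  moreover have "of_int T / (2::complex) \<in> \<rat>" by simp
  ultimately have "of_int T / (2::complex) \<in> \<int>" by (rule rational_algebraic_int_is_int)
  then obtain m where "of_int T / (2::complex) = of_int m" by (auto elim: Ints_cases)
  hence "(of_int T :: complex) = of_int (2 * m)" by (simp add: field_simps)
  hence "T = 2 * m" by (simp only: of_int_eq_iff)
  thus ?thesis by simp
qed

end



definition cg :: "complex \<Rightarrow> complex \<Rightarrow> bool" where
  "cg x y \<longleftrightarrow> algebraic_int ((x - y) / 2)"

lemma cg_refl: "cg x x" unfolding cg_def by simp

lemma cg_trans: "cg x y \<Longrightarrow> cg y z \<Longrightarrow> cg x z"
proof -
  assume "cg x y" "cg y z"
  hence "algebraic_int ((x - y) / 2 + (y - z) / 2)" unfolding cg_def by (rule ai_add)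
  also have "(x - y) / 2 + (y - z) / 2 = (x - z) / 2" by (simp add: field_simps)
  finally show ?thesis unfolding cg_def .
qed

lemma cg_add: "cg a b \<Longrightarrow> cg c d \<Longrightarrow> cg (a + c) (b + d)"
proof -
  assume "cg a b" "cg c d"
  hence "algebraic_int ((a - b) / 2 + (c - d) / 2)" unfolding cg_def by (rule ai_add)
  also have "(a - b) / 2 + (c - d) / 2 = ((a + c) - (b + d)) / 2" by (simp add: field_simps)
  finally show ?thesis unfolding cg_def .
qed

lemma cg_mult: "algebraic_int c \<Longrightarrow> cg a b \<Longrightarrow> cg (c * a) (c * b)"
proof -
  assume "algebraic_int c" "cg a b"
  hence "algebraic_int (c * ((a - b) / 2))" unfolding cg_def by (rule ai_mult)
  also have "c * ((a - b) / 2) = (c * a - c * b) / 2" by (simp add: field_simps)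
  finally show ?thesis unfolding cg_def .
qed

lemma cg_double: "algebraic_int x \<Longrightarrow> cg (2 * x) 0"
  unfolding cg_def by simp

lemma cg_sq: "algebraic_int a \<Longrightarrow> algebraic_int b \<Longrightarrow> cg a b \<Longrightarrow> cg (a ^ 2) (b ^ 2)"
proof -
  assume "algebraic_int a" "algebraic_int b" "cg a b"
  hence "algebraic_int ((a + b) * ((a - b) / 2))" unfolding cg_def by (intro ai_mult ai_add)
  also have "(a + b) * ((a - b) / 2) = (a ^ 2 - b ^ 2) / 2" by (simp add: field_simps power2_eq_square)
  finally show ?thesis unfolding cg_def .
qed

lemma Fr_add:
  assumes a: "algebraic_int a" and b: "algebraic_int b"
  shows "cg ((a + b) ^ (2 ^ n)) (a ^ (2 ^ n) + b ^ (2 ^ n))"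
proof (induction n)
  case 0 thus ?case by (simp add: cg_refl)
next
  case (Suc n)
  let ?A = "a ^ (2 ^ n)" and ?B = "b ^ (2 ^ n)"
  have aA: "algebraic_int ?A" "algebraic_int ?B" using a b by auto
  have "cg (((a + b) ^ (2 ^ n)) ^ 2) ((?A + ?B) ^ 2)"
    using Suc a b aA by (intro cg_sq) auto
  moreover have "(?A + ?B) ^ 2 = ?A ^ 2 + ?B ^ 2 + 2 * (?A * ?B)" by (simp add: power2_eq_square algebra_simps)
  moreover have "cg (?A ^ 2 + ?B ^ 2 + 2 * (?A * ?B)) (?A ^ 2 + ?B ^ 2 + 0)"
    using aA by (intro cg_add cg_refl cg_double) auto
  ultimately have "cg (((a + b) ^ (2 ^ n)) ^ 2) (?A ^ 2 + ?B ^ 2)" using cg_trans by simp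
  moreover have "\<And>x::complex. (x ^ (2 ^ n)) ^ 2 = x ^ (2 ^ Suc n)" by (simp flip: power_mult add: mult.commute)
  ultimately show ?case by metis
qed

lemma even_pow_minus: "even ((c::int) ^ (2 ^ n) - c)"
  by (cases "even c") auto

lemma Fr_int:
  assumes a: "algebraic_int a"
  shows "cg ((of_int c * a) ^ (2 ^ n)) (of_int c * a ^ (2 ^ n))"
proof -
  obtain m where m: "c ^ (2 ^ n) - c = 2 * m" using even_pow_minus[of c n] by blast
  have "((of_int c * a) ^ (2 ^ n) - of_int c * a ^ (2 ^ n)) / 2 = of_int m * a ^ (2 ^ n)"
  proof -
    have "(of_int c * a) ^ (2 ^ n) - of_int c * a ^ (2 ^ n) = of_int (c ^ (2 ^ n) - c) * a ^ (2 ^ n)"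
      by (simp add: power_mult_distrib algebra_simps)
    also have "\<dots> = 2 * (of_int m * a ^ (2 ^ n))" unfolding m by simp
    finally show ?thesis by simp
  qed
  moreover have "algebraic_int (of_int m * a ^ (2 ^ n))" using a by auto
  ultimately show ?thesis unfolding cg_def by simp
qed

lemma Fr_sum:
  assumes "finite A" "\<And>x. x \<in> A \<Longrightarrow> algebraic_int (f x)"
  shows "cg ((\<Sum>x\<in>A. f x) ^ (2 ^ n)) (\<Sum>x\<in>A. f x ^ (2 ^ n))"
  using assms
proof (induction A rule: finite_induct)
  case empty have z: "(0::complex) ^ (2 ^ n) = 0" by (simp add: zero_power)
    show ?case unfolding sum.empty z by (rule cg_refl)
next
  case (insert x A)
  have s: "algebraic_int (\<Sum>x\<in>A. f x)" using insert by (intro ai_sum) auto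
  have "cg ((f x + (\<Sum>x\<in>A. f x)) ^ (2 ^ n)) (f x ^ (2 ^ n) + (\<Sum>x\<in>A. f x) ^ (2 ^ n))"
    using insert s by (intro Fr_add) auto
  moreover have "cg (f x ^ (2 ^ n) + (\<Sum>x\<in>A. f x) ^ (2 ^ n)) (f x ^ (2 ^ n) + (\<Sum>x\<in>A. f x ^ (2 ^ n)))"
    using insert by (intro cg_add cg_refl) auto
  ultimately show ?case using insert cg_trans by simp
qed

lemma cg_sum:
  assumes "finite A" "\<And>x. x \<in> A \<Longrightarrow> cg (f x) (g x)"
  shows "cg (\<Sum>x\<in>A. f x) (\<Sum>x\<in>A. g x)"
  using assms by (induction A rule: finite_induct) (auto intro: cg_add cg_refl)




lemma map_of_int_sum: "map_poly (of_int :: int \<Rightarrow> complex) (\<Sum>j\<in>J. f j) = (\<Sum>j\<in>J. map_poly of_int (f j))"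
  by (rule poly_eqI) (simp add: coeff_map_poly coeff_sum)

lemma map_of_int_add: "map_poly (of_int :: int \<Rightarrow> complex) (f + g) = map_poly of_int f + map_poly of_int g"
  by (rule poly_eqI) (simp add: coeff_map_poly)

declare cg_trans[trans]

lemma cg_sym: "cg x y \<Longrightarrow> cg y x"
proof -
  assume "cg x y"
  hence "algebraic_int (- ((x - y) / 2))" unfolding cg_def by simp
  also have "- ((x - y) / 2) = (y - x) / 2" by (simp add: field_simps)
  finally show ?thesis unfolding cg_def .
qed

context
  fixes r p :: nat
  assumes r3: "r \<ge> 3" and prime_p: "prime p" and p5: "p \<ge> 5"
begin

definition "NN = r * (p - 1)"
definition "n2 = (p - 1) div 2"

lemma pp: "p = 2 * n2 + 1"
  using p_odd[OF prime_p p5] p5 unfolding n2_def by (metis Suc_eq_plus1 Suc_pred' dvd_mult_div_cancel even_Suc gr0I less_nat_zero_code odd_two_times_div_two_nat p_pos[OF prime_p p5])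

lemma n2_ge: "n2 \<ge> 2" using pp p5 by simp

lemma E_mod: "2 ^ NN mod p = 1"
proof -
  have "\<not> p dvd 2" using p5 by (auto dest: dvd_imp_le)
  hence "[2 ^ (p - 1) = 1] (mod p)" using fermat_theorem[OF prime_p] by blast
  hence "[(2 ^ (p - 1)) ^ r = 1 ^ r] (mod p)" by (rule cong_pow)
  moreover have "(2::nat) ^ NN = (2 ^ (p - 1)) ^ r" unfolding NN_def by (simp only: mult.commute[of r] power_mult)
  ultimately have "[2 ^ NN = 1] (mod p)" by simp
  thus ?thesis using p5 by (simp add: cong_def)
qed

lemma E_dvd: "2 ^ r dvd (2::nat) ^ NN"
proof (rule le_imp_power_dvd)
  have "1 \<le> p - 1" using p5 by simp
  hence "r * 1 \<le> r * (p - 1)" by (rule mult_le_mono2)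
  thus "r \<le> NN" unfolding NN_def by simp
qed

lemma u_E: "zeta (2 ^ r) ^ (k * 2 ^ NN) = 1"
  using zeta_pow_eq_1[of "2^r" "k * 2 ^ NN"] E_dvd by simp

lemma v_E: "zeta p ^ (k * 2 ^ NN) = zeta p ^ k"
proof -
  have "(k * 2 ^ NN) mod p = k mod p" using E_mod by (metis mod_mult_right_eq mult.right_neutral)
  thus ?thesis using zeta_pow_mod[OF p_pos[OF prime_p p5]] by metis
qed

lemma eR_eq: "i \<noteq> 0 \<Longrightarrow> eR r i = zeta (2^r) ^ i + zeta (2^r) ^ (i * (2^r - 1))"
  unfolding eR_def using inverse_zeta_pow[of "2^r" i] by simp

lemma bP_eq: "bP p j = zeta p ^ j + zeta p ^ (j * (2 * n2))"
proof -
  have "p - 1 = 2 * n2" using pp by simp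
  thus ?thesis unfolding bP_def using inverse_zeta_pow[OF p_pos[OF prime_p p5], of j] by simp
qed

lemma ai_u: "algebraic_int (zeta (2^r) ^ k)" by (rule alg_int_zeta_pow) simp
lemma ai_v: "algebraic_int (zeta p ^ k)" by (rule alg_int_zeta_pow[OF p_pos[OF prime_p p5]])

lemma ai_eR: "algebraic_int (eR r i)"
proof (cases "i = 0")
  case True thus ?thesis by (simp add: eR_def)
next
  case False thus ?thesis unfolding eR_eq[OF False] by (intro ai_add ai_u)
qed
lemma ai_bP: "algebraic_int (bP p j)"
  by (auto simp: bP_eq ai_v)

lemma Fr_eR: "i \<noteq> 0 \<Longrightarrow> cg (eR r i ^ (2 ^ NN)) 0"
proof -
  assume i: "i \<noteq> 0"
  let ?u = "zeta (2^r)"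
  have "cg (eR r i ^ (2 ^ NN)) ((?u ^ i) ^ (2 ^ NN) + (?u ^ (i * (2^r - 1))) ^ (2 ^ NN))"
    unfolding eR_eq[OF i] by (rule Fr_add[OF ai_u ai_u])
  also have "(?u ^ i) ^ (2 ^ NN) + (?u ^ (i * (2^r - 1))) ^ (2 ^ NN) = 2 * 1"
    by (simp only: power_mult[symmetric] u_E) simp
  finally have "cg (eR r i ^ (2 ^ NN)) (2 * 1)" .
  moreover have "cg (2 * 1) 0" by (rule cg_double) simp
  ultimately show ?thesis by (rule cg_trans)
qed

lemma Fr_bP: "cg (bP p j ^ (2 ^ NN)) (bP p j)"
proof -
  let ?v = "zeta p"
  have "cg (bP p j ^ (2 ^ NN)) ((?v ^ j) ^ (2 ^ NN) + (?v ^ (j * (2 * n2))) ^ (2 ^ NN))"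
    unfolding bP_eq by (rule Fr_add[OF ai_v ai_v])
  also have "(?v ^ j) ^ (2 ^ NN) + (?v ^ (j * (2 * n2))) ^ (2 ^ NN) = bP p j"
    unfolding bP_eq by (simp only: power_mult[symmetric] v_E)
  finally show ?thesis .
qed

definition "kk j = (if j = n2 then 2 else (1::int))"

lemma basis_eq: "basis_elt r p (i, j) = of_int (if i = 0 then kk j else 1) * eR r i * bP p j"
  unfolding basis_elt_def kk_def n2_def by simp

lemma Fr_basis: "cg (basis_elt r p (i, j) ^ (2 ^ NN)) (if i = 0 then of_int (kk j) * bP p j else 0)"
proof -
  define k where "k = (if i = 0 then kk j else 1)"
  have "cg ((of_int k * (eR r i * bP p j)) ^ (2 ^ NN)) (of_int k * (eR r i * bP p j) ^ (2 ^ NN))"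
    by (rule Fr_int) (intro ai_mult ai_eR ai_bP)
  hence c1: "cg (basis_elt r p (i, j) ^ (2 ^ NN)) (of_int k * (eR r i ^ (2 ^ NN) * bP p j ^ (2 ^ NN)))"
    unfolding basis_eq k_def[symmetric] by (simp add: mult.assoc power_mult_distrib)
  show ?thesis
  proof (cases "i = 0")
    case True
    have "cg (of_int k * bP p j ^ (2 ^ NN)) (of_int k * bP p j)" by (intro cg_mult Fr_bP) simp
    thus ?thesis using c1 True unfolding k_def eR_def by (auto intro: cg_trans)
  next
    case False
    have "cg ((of_int k * bP p j ^ (2 ^ NN)) * eR r i ^ (2 ^ NN)) ((of_int k * bP p j ^ (2 ^ NN)) * 0)"
      by (intro cg_mult Fr_eR False ai_mult ai_power ai_bP) simp
    hence "cg (of_int k * (eR r i ^ (2 ^ NN) * bP p j ^ (2 ^ NN))) 0" by (simp add: ac_simps)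
    thus ?thesis using c1 False by (auto intro: cg_trans)
  qed
qed


definition "Idx = {0..<(2::nat)^(r-2)} \<times> {1..n2}"

lemma ai_basis: "algebraic_int (basis_elt r p x)"
proof -
  obtain i j where x: "x = (i, j)" by (cases x)
  show ?thesis unfolding x basis_eq by (intro ai_mult ai_eR ai_bP) simp
qed

lemma S_eq:
  fixes c :: "nat \<times> nat \<Rightarrow> int"
  shows "(\<Sum>x\<in>Idx. of_int (c x) * (if fst x = 0 then of_int (kk (snd x)) * bP p (snd x) else 0)) =
         (\<Sum>j\<in>{1..n2}. of_int (c (0, j) * kk j) * bP p j)"
proof -
  have "(\<Sum>x\<in>Idx. of_int (c x) * (if fst x = 0 then of_int (kk (snd x)) * bP p (snd x) else 0)) =
        (\<Sum>i\<in>{0..<(2::nat)^(r-2)}. \<Sum>j\<in>{1..n2}. of_int (c (i, j)) * (if i = 0 then of_int (kk j) * bP p j else 0))"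
    unfolding Idx_def by (simp only: sum.cartesian_product' fst_conv snd_conv)
  also have "\<dots> = (\<Sum>i\<in>{0..<(2::nat)^(r-2)}. if i = 0 then (\<Sum>j\<in>{1..n2}. of_int (c (0, j) * kk j) * bP p j) else 0)"
    by (intro sum.cong refl) (auto simp: mult.assoc)
  also have "\<dots> = (\<Sum>j\<in>{1..n2}. of_int (c (0, j) * kk j) * bP p j)"
    using r3 by (simp add: sum.delta)
  finally show ?thesis .
qed

lemma Fr_span:
  fixes c :: "nat \<times> nat \<Rightarrow> int"
  shows "cg ((\<Sum>x\<in>Idx. of_int (c x) * basis_elt r p x) ^ (2 ^ NN)) (\<Sum>j\<in>{1..n2}. of_int (c (0, j) * kk j) * bP p j)"
proof -
  have fin: "finite Idx" unfolding Idx_def by simp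
  have "cg ((\<Sum>x\<in>Idx. of_int (c x) * basis_elt r p x) ^ (2 ^ NN)) (\<Sum>x\<in>Idx. (of_int (c x) * basis_elt r p x) ^ (2 ^ NN))"
    by (rule Fr_sum[OF fin]) (intro ai_mult ai_basis, simp)
  also have "cg \<dots> (\<Sum>x\<in>Idx. of_int (c x) * basis_elt r p x ^ (2 ^ NN))"
    by (rule cg_sum[OF fin]) (rule Fr_int[OF ai_basis])
  also have "cg \<dots> (\<Sum>x\<in>Idx. of_int (c x) * (if fst x = 0 then of_int (kk (snd x)) * bP p (snd x) else 0))"
  proof (rule cg_sum[OF fin])
    fix x :: "nat \<times> nat"
    obtain i j where x: "x = (i, j)" by (cases x)
    show "cg (of_int (c x) * basis_elt r p x ^ (2 ^ NN)) (of_int (c x) * (if fst x = 0 then of_int (kk (snd x)) * bP p (snd x) else 0))"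
      unfolding x fst_conv snd_conv by (rule cg_mult[OF _ Fr_basis]) simp
  qed
  also have "(\<Sum>x\<in>Idx. of_int (c x) * (if fst x = 0 then of_int (kk (snd x)) * bP p (snd x) else 0)) =
         (\<Sum>j\<in>{1..n2}. of_int (c (0, j) * kk j) * bP p j)" by (rule S_eq)
  finally show ?thesis .
qed

definition "tau k = (if p dvd k then int p - 1 else -1)"

lemma SUMTAU: "(\<Sum>s\<in>{1..<p}. (zeta p ^ s) ^ k) = of_int (tau k)"
proof -
  have pp0: "p > 0" using p5 by simp
  have "(\<Sum>s<p. (zeta p ^ k) ^ s) = (if p dvd k then of_nat p else 0)"
  proof (cases "p dvd k")
    case True
    hence "zeta p ^ k = 1" using zeta_pow_eq_1[OF pp0] by simp
    thus ?thesis using True by simp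
  next
    case False thus ?thesis using sum_zeta_pow[OF pp0 False] by simp
  qed
  moreover have "{..<p} = insert 0 {1..<p}" using p5 by auto
  ultimately have "1 + (\<Sum>s\<in>{1..<p}. (zeta p ^ k) ^ s) = (if p dvd k then of_nat p else 0)" by simp
  moreover have "(\<Sum>s\<in>{1..<p}. (zeta p ^ s) ^ k) = (\<Sum>s\<in>{1..<p}. (zeta p ^ k) ^ s)"
    by (intro sum.cong refl) (simp only: power_mult[symmetric] mult.commute)
  ultimately have X: "(\<Sum>s\<in>{1..<p}. (zeta p ^ s) ^ k) = (if p dvd k then of_nat p else 0) - 1"
    by (simp add: eq_diff_eq add.commute)
  show ?thesis unfolding X tau_def by simp
qed

lemma tau_e: "j \<le> n2 \<Longrightarrow> tau (n2 + 1 + j) = (if j = n2 then int p - 1 else -1)"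
proof -
  assume j: "j \<le> n2"
  show ?thesis
  proof (cases "j = n2")
    case True
    have "n2 + 1 + j = p" using True pp by linarith
    thus ?thesis unfolding tau_def using True by simp
  next
    case False
    hence "0 < n2 + 1 + j" "n2 + 1 + j < p" using j pp by linarith+
    hence "\<not> p dvd n2 + 1 + j" by (auto dest: dvd_imp_le)
    thus ?thesis unfolding tau_def using False by simp
  qed
qed

lemma tau_f: "j \<le> n2 \<Longrightarrow> tau (n2 + 1 + j * (2 * n2)) = -1"
proof -
  assume j: "j \<le> n2"
  have e0: "(n2 + 1 + j * (2 * n2)) + (n2 + j) = (2 * n2 + 1) * (j + 1)" by (simp add: algebra_simps)
  have e: "(n2 + 1 + j * (2 * n2)) + (n2 + j) = p * (j + 1)" by (simp only: e0 pp[symmetric])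
  have "\<not> p dvd n2 + 1 + j * (2 * n2)"
  proof
    assume d: "p dvd n2 + 1 + j * (2 * n2)"
    have "p dvd p * (j + 1)" by simp
    hence h: "p dvd (n2 + 1 + j * (2 * n2)) + (n2 + j)" unfolding e .
    have "p dvd n2 + j" using dvd_add_right_iff[OF d] h by blast
    moreover have "0 < n2 + j" "n2 + j < p" using j pp n2_ge by linarith+
    ultimately show False by (auto dest: dvd_imp_le)
  qed
  thus ?thesis unfolding tau_def by simp
qed

lemma TR_contra:
  fixes d :: "nat \<Rightarrow> int"
  assumes dn: "even (d n2)"
    and cgs: "cg (bP p n2 + bP p (n2 - 2)) (\<Sum>j\<in>{1..n2}. of_int (d j) * bP p j)"
  shows False
proof -
  define J where "J = {0..n2}"
  define w where "w = (\<lambda>j. (if j = n2 then 1 else 0) + (if j = n2 - 2 then 1 else 0) - (if 1 \<le> j then d j else (0::int)))"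
  have fJ: "finite J" unfolding J_def by simp
  have n2J: "n2 \<in> J" "n2 - 2 \<in> J" unfolding J_def by auto
  have J1: "J = insert 0 {1..n2}" "0 \<notin> {1..n2}" unfolding J_def by auto
  have diff: "bP p n2 + bP p (n2 - 2) - (\<Sum>j\<in>{1..n2}. of_int (d j) * bP p j) = (\<Sum>j\<in>J. of_int (w j) * bP p j)"
  proof -
    have "(\<Sum>j\<in>J. of_int (w j) * bP p j) = (\<Sum>j\<in>J. (if j = n2 then bP p j else 0) + (if j = n2 - 2 then bP p j else 0)
        - (if 1 \<le> j then of_int (d j) * bP p j else 0))"
      unfolding w_def by (intro sum.cong refl) (auto simp: algebra_simps)
    also have "\<dots> = bP p n2 + bP p (n2 - 2) - (\<Sum>j\<in>J. (if 1 \<le> j then of_int (d j) * bP p j else 0))"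
      using fJ n2J by (simp add: sum.distrib sum_subtractf sum.delta)
    also have "(\<Sum>j\<in>J. (if 1 \<le> j then of_int (d j) * bP p j else 0)) = (\<Sum>j\<in>{1..n2}. of_int (d j) * bP p j)"
      unfolding J1 by (simp add: sum.insert)
    finally show ?thesis by simp
  qed
  define e where "e = (\<lambda>j. n2 + 1 + j)"
  define f where "f = (\<lambda>j. n2 + 1 + j * (2 * n2))"
  define G where "G = (\<Sum>j\<in>J. Polynomial.monom (w j) (e j) + Polynomial.monom (w j) (f j))"
  have pG: "poly (map_poly of_int G) z = (\<Sum>j\<in>J. of_int (w j) * (z ^ e j + z ^ f j))" for z :: complex
    unfolding G_def map_of_int_sum map_of_int_add by (simp add: poly_sum map_poly_monom poly_monom algebra_simps)
  have "poly (map_poly of_int G) (zeta p) = zeta p ^ (n2 + 1) * (\<Sum>j\<in>J. of_int (w j) * bP p j)"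
    unfolding pG bP_eq e_def f_def by (simp add: sum_distrib_left power_add algebra_simps)
  hence "poly (map_poly of_int G) (zeta p) / 2 = zeta p ^ (n2 + 1) * ((bP p n2 + bP p (n2 - 2) - (\<Sum>j\<in>{1..n2}. of_int (d j) * bP p j)) / 2)"
    unfolding diff by simp
  moreover have "algebraic_int (zeta p ^ (n2 + 1) * ((bP p n2 + bP p (n2 - 2) - (\<Sum>j\<in>{1..n2}. of_int (d j) * bP p j)) / 2))"
    using cgs unfolding cg_def by (intro ai_mult ai_v)
  ultimately have aG: "algebraic_int (poly (map_poly of_int G) (zeta p) / 2)" by simp
  define T where "T = (\<Sum>j\<in>J. w j * (tau (e j) + tau (f j)))"
  have "(\<Sum>s\<in>{1..<p}. poly (map_poly of_int G) (zeta p ^ s)) =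
        (\<Sum>j\<in>J. of_int (w j) * ((\<Sum>s\<in>{1..<p}. (zeta p ^ s) ^ e j) + (\<Sum>s\<in>{1..<p}. (zeta p ^ s) ^ f j)))"
  proof -
    have "(\<Sum>s\<in>{1..<p}. poly (map_poly of_int G) (zeta p ^ s)) =
      (\<Sum>s\<in>{1..<p}. \<Sum>j\<in>J. of_int (w j) * ((zeta p ^ s) ^ e j + (zeta p ^ s) ^ f j))" unfolding pG ..
    also have "\<dots> = (\<Sum>j\<in>J. \<Sum>s\<in>{1..<p}. of_int (w j) * ((zeta p ^ s) ^ e j + (zeta p ^ s) ^ f j))"
      by (rule sum.swap)
    also have "\<dots> = (\<Sum>j\<in>J. of_int (w j) * ((\<Sum>s\<in>{1..<p}. (zeta p ^ s) ^ e j) + (\<Sum>s\<in>{1..<p}. (zeta p ^ s) ^ f j)))"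
      by (intro sum.cong refl) (simp only: sum.distrib[symmetric] sum_distrib_left)
    finally show ?thesis .
  qed
  also have "\<dots> = of_int T" unfolding T_def SUMTAU by simp
  finally have "even T" by (rule TRACE[OF prime_p p5 aG])
  moreover have "odd T"
  proof -
    have t: "tau (e j) + tau (f j) = (if j = n2 then int p - 2 else -2)" if "j \<in> J" for j
      using that tau_e tau_f unfolding e_def f_def J_def by auto
    have "T = w n2 * (int p - 2) + (\<Sum>j\<in>J - {n2}. w j * (-2))"
    proof -
      have "T = (\<Sum>j\<in>J. w j * (if j = n2 then int p - 2 else -2))"
        unfolding T_def by (intro sum.cong refl) (simp add: t)
      also have "\<dots> = w n2 * (int p - 2) + (\<Sum>j\<in>J - {n2}. w j * (if j = n2 then int p - 2 else -2))"
        by (subst sum.remove[OF fJ n2J(1)]) simp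
      also have "(\<Sum>j\<in>J - {n2}. w j * (if j = n2 then int p - 2 else -2)) = (\<Sum>j\<in>J - {n2}. w j * (-2))"
        by (intro sum.cong refl) auto
      finally show ?thesis .
    qed
    moreover have "even (\<Sum>j\<in>J - {n2}. w j * (-2))" by (intro dvd_sum) simp
    moreover have "w n2 = 1 - d n2" unfolding w_def using n2_ge by simp
    moreover have "odd (int p - 2)" using p_odd[OF prime_p p5] by simp
    ultimately show ?thesis using dn by simp
  qed
  ultimately show False by simp
qed

lemma bP_mult: "j \<ge> 1 \<Longrightarrow> bP p 1 * bP p j = bP p (Suc j) + bP p (j - 1)"
proof -
  assume j: "j \<ge> 1"
  then obtain i where i: "j = Suc i" by (cases j) auto
  define x where "x = zeta p"
  have x0: "x \<noteq> 0" unfolding x_def by (rule zeta_ne0)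
  have z0: "x ^ i \<noteq> 0" using x0 by simp
  have "bP p 1 * bP p j = (x + inverse x) * (x * x ^ i + inverse (x * x ^ i))"
    unfolding bP_def x_def[symmetric] i by simp
  also have "\<dots> = x * (x * x ^ i) + inverse (x * (x * x ^ i)) + (x ^ i + inverse (x ^ i))"
    using x0 z0 by (simp add: field_simps)
  also have "\<dots> = bP p (Suc j) + bP p (j - 1)"
    unfolding bP_def x_def[symmetric] i by simp
  finally show ?thesis .
qed

lemma in_gen_field: "x \<in> S \<Longrightarrow> x \<in> gen_field S"
  unfolding gen_field_def by blast

lemma b1O: "bP p 1 \<in> ring_of_integers (KK r p)"
proof -
  have "bP p 1 \<in> KK r p" unfolding KK_def
    by (rule in_gen_field, rule UnI2, rule in_gen_field) simp
  thus ?thesis unfolding ring_of_integers_def using ai_bP by simp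
qed

lemma Zspan_elt:
  assumes "finite A" "x \<in> A"
  shows "f x \<in> Zspan A f"
proof -
  have "(\<Sum>a\<in>A. of_int (if a = x then 1 else 0) * f a) = (\<Sum>a\<in>A. if a = x then f a else 0)"
    by (intro sum.cong refl) auto
  also have "\<dots> = f x" using assms by (simp add: sum.delta)
  finally have "f x = (\<Sum>a\<in>A. of_int (if a = x then 1 else 0) * f a)" by simp
  thus ?thesis unfolding Zspan_def by (intro CollectI exI[of _ "\<lambda>a. if a = x then 1 else 0"]) simp
qed

lemma II_eq: "II r p = Zspan Idx (basis_elt r p)"
  unfolding II_def Idx_def n2_def ..

lemma bI: "bP p (n2 - 1) \<in> II r p"
proof -
  have mem: "(0, n2 - 1) \<in> Idx" unfolding Idx_def using n2_ge by auto
  have "basis_elt r p (0, n2 - 1) = bP p (n2 - 1)"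
    unfolding basis_eq kk_def using n2_ge by (simp add: eR_def)
  moreover have "basis_elt r p (0, n2 - 1) \<in> II r p"
    unfolding II_eq by (rule Zspan_elt[OF _ mem]) (simp add: Idx_def)
  ultimately show ?thesis by simp
qed

lemma main: "\<not> is_ideal (II r p) (ring_of_integers (KK r p))"
proof
  assume id: "is_ideal (II r p) (ring_of_integers (KK r p))"
  have "bP p 1 * bP p (n2 - 1) \<in> II r p" using id b1O bI unfolding is_ideal_def by blast
  then obtain c where a: "bP p 1 * bP p (n2 - 1) = (\<Sum>x\<in>Idx. of_int (c x) * basis_elt r p x)"
    unfolding II_eq Zspan_def by blast
  have aeq: "bP p 1 * bP p (n2 - 1) = bP p n2 + bP p (n2 - 2)"
  proof -
    have "bP p 1 * bP p (n2 - 1) = bP p (Suc (n2 - 1)) + bP p (n2 - 1 - 1)" using n2_ge by (intro bP_mult) simp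
    moreover have "Suc (n2 - 1) = n2" "n2 - 1 - 1 = n2 - 2" using n2_ge by auto
    ultimately show ?thesis by simp
  qed
  have c1: "cg ((bP p n2 + bP p (n2 - 2)) ^ (2 ^ NN)) (\<Sum>j\<in>{1..n2}. of_int (c (0, j) * kk j) * bP p j)"
    using Fr_span[of c] unfolding a[symmetric] aeq .
  have "cg ((bP p n2 + bP p (n2 - 2)) ^ (2 ^ NN)) (bP p n2 ^ (2 ^ NN) + bP p (n2 - 2) ^ (2 ^ NN))"
    by (rule Fr_add[OF ai_bP ai_bP])
  also have "cg \<dots> (bP p n2 + bP p (n2 - 2))" by (intro cg_add Fr_bP)
  finally have c2: "cg ((bP p n2 + bP p (n2 - 2)) ^ (2 ^ NN)) (bP p n2 + bP p (n2 - 2))" .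
  have "cg (bP p n2 + bP p (n2 - 2)) (\<Sum>j\<in>{1..n2}. of_int (c (0, j) * kk j) * bP p j)"
    using cg_sym[OF c2] c1 by (rule cg_trans)
  moreover have "even (c (0, n2) * kk n2)" unfolding kk_def by simp
  ultimately show False using TR_contra[of "\<lambda>j. c (0, j) * kk j"] by blast
qed
end

theorem proposition3p5:
  fixes r p :: nat
  assumes "r \<ge> 3" and "prime p" and "p \<ge> 5"
  shows "\<not> is_ideal (II r p) (ring_of_integers (KK r p))"
  using main[OF assms] .


end
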